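(* Let $Q,R,F\subseteq\mathcal{P}$, and define $\mu=\gcd\!\left(\dfrac{\xi_{\mathcal{P}}}{TM(\xi_F)},\ TM(\xi_Q),\ TM(\xi_R)\right)$ and $\nu=\dfrac{\xi_Q}{TM(\xi_Q)}\cdot\dfrac{\xi_R}{TM(\xi_R)}\cdot\dfrac{\xi_{F^c}}{TM(\xi_{F^c})}$. Then $\xi_{(Q\cap R)\setminus F}=\xi_{(Q\cap R)\cap F^c}=\mu\cdot\nu$.
   Context: $\mathcal{P}=\{P_1,\ldots,P_n\}$, $F^c=\mathcal{P}\setminus F$; $\varphi:2^{\mathcal{P}}\to\mathbb{F}_2^n$ sends a set to its indicator vector; for $S\subseteq\mathcal{P}$, $\xi_S(Y_1,\ldots,Y_n)=\prod_{i=1}^n(1+Y_i+\varphi(S)_i)$, i.e. $\xi_S=\prod_{i:P_i\in S}Y_i\cdot\prod_{i:P_i\notin S}(1+Y_i)$; in particular $\xi_{\mathcal{P}}=Y_1\cdots Y_n$. $TM(f)$ is the smallest monomial of $f$ in the lexicographic order with $Y_n\prec\cdots\prec Y_1$. The quotient $\xi_S/TM(\xi_S)$ is the polynomial $\prod_{i:P_i\notin S}(1+Y_i)$, and $\xi_{\mathcal{P}}/TM(\xi_F)=\prod_{i:P_i\notin F}Y_i$; the gcd is that of monomials; products and the equality are in the Boolean polynomial ring $\mathbb{F}_2[\bar Y]/\langle Y_i^2-Y_i\rangle$. *)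

theory Defs
  imports Main
begin

text \<open>Boolean polynomial ring F2[Y_0..Y_(n-1)] / (Y_i^2 - Y_i).
  Every element has a unique multilinear representative; we represent it by the
  (finite) set of its monomials, a monomial being the (finite) set of variable
  indices occurring in it. Player P_(i+1) corresponds to index i < n.\<close>

type_synonym bpoly = "nat set set"

definition bzero :: bpoly where "bzero = {}"
definition bone :: bpoly where "bone = {{}}"
definition bvar :: "nat \<Rightarrow> bpoly" where "bvar i = {{i}}"

definition badd :: "bpoly \<Rightarrow> bpoly \<Rightarrow> bpoly" where
  "badd p q = (p - q) \<union> (q - p)"

text \<open>Product of monomials is union (since Y_i^2 = Y_i); coefficients mod 2.\<close>
definition bmul :: "bpoly \<Rightarrow> bpoly \<Rightarrow> bpoly" where
  "bmul p q = {m. odd (card {(a, b). a \<in> p \<and> b \<in> q \<and> a \<union> b = m})}"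

fun bprod_upto :: "(nat \<Rightarrow> bpoly) \<Rightarrow> nat \<Rightarrow> bpoly" where
  "bprod_upto f 0 = bone"
| "bprod_upto f (Suc k) = bmul (bprod_upto f k) (f k)"

definition phi_const :: "nat set \<Rightarrow> nat \<Rightarrow> bpoly" where
  "phi_const S i = (if i \<in> S then bone else bzero)"

definition xi :: "nat \<Rightarrow> nat set \<Rightarrow> bpoly" where
  "xi n S = bprod_upto (\<lambda>i. badd (badd bone (bvar i)) (phi_const S i)) n"

text \<open>Lexicographic order on multilinear monomials with Y_(n-1) < ... < Y_0
  (variable Y_0 most significant): m is smaller than m' iff at the first index
  where they differ, m' contains it.\<close>
definition lex_less :: "nat set \<Rightarrow> nat set \<Rightarrow> bool" where
  "lex_less m m' \<longleftrightarrow> (\<exists>i. i \<in> m' \<and> i \<notin> m \<and> (\<forall>j<i. j \<in> m \<longleftrightarrow> j \<in> m'))"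

definition TM :: "bpoly \<Rightarrow> nat set" where
  "TM p = (THE m. m \<in> p \<and> (\<forall>m'\<in>p. m' \<noteq> m \<longrightarrow> lex_less m m'))"

definition bdiv_mono :: "bpoly \<Rightarrow> nat set \<Rightarrow> bpoly" where
  "bdiv_mono p t = (\<lambda>m. m - t) ` p"

definition the_mono :: "bpoly \<Rightarrow> nat set" where
  "the_mono p = (THE m. p = {m})"

definition mono_gcd3 :: "bpoly \<Rightarrow> bpoly \<Rightarrow> bpoly \<Rightarrow> bpoly" where
  "mono_gcd3 a b c = {the_mono a \<inter> the_mono b \<inter> the_mono c}"

end

theory Submission
  imports Defs
begin

definition PP :: "nat set \<Rightarrow> nat set \<Rightarrow> bpoly" where
  "PP A B = {m. A \<subseteq> m \<and> m \<subseteq> A \<union> B}"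

definition TT :: "nat set \<Rightarrow> (nat set \<times> nat set) set" where
  "TT C = {(s,t). s \<union> t = C}"

lemma TT_fin: "finite C \<Longrightarrow> finite (TT C)"
proof -
  assume "finite C"
  have "TT C \<subseteq> Pow C \<times> Pow C" unfolding TT_def by auto
  then show ?thesis using \<open>finite C\<close> by (meson finite_Pow_iff finite_SigmaI finite_subset)
qed

lemma TT_card: "finite C \<Longrightarrow> card (TT C) = 3 ^ card C"
proof (induction C rule: finite_induct)
  case empty
  have "TT {} = {({},{})}" unfolding TT_def by auto
  then show ?case by simp
next
  case (insert x C)
  define f1 where "f1 = (\<lambda>(s::nat set,t::nat set). (insert x s, t))"
  define f2 where "f2 = (\<lambda>(s::nat set,t::nat set). (s, insert x t))"
  define f3 where "f3 = (\<lambda>(s::nat set,t::nat set). (insert x s, insert x t))"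
  have sub: "\<And>s t. (s,t) \<in> TT C \<Longrightarrow> x \<notin> s \<and> x \<notin> t" using insert(2) unfolding TT_def by auto
  have eq: "TT (insert x C) = f1 ` TT C \<union> f2 ` TT C \<union> f3 ` TT C"
  proof
    show "f1 ` TT C \<union> f2 ` TT C \<union> f3 ` TT C \<subseteq> TT (insert x C)"
      unfolding TT_def f1_def f2_def f3_def by auto
  next
    show "TT (insert x C) \<subseteq> f1 ` TT C \<union> f2 ` TT C \<union> f3 ` TT C"
    proof
      fix p assume p: "p \<in> TT (insert x C)"
      obtain s t where st: "p = (s,t)" by (cases p)
      have u: "s \<union> t = insert x C" using p st unfolding TT_def by auto
      have T0: "(s - {x}, t - {x}) \<in> TT C" using u insert(2) unfolding TT_def by auto
      consider "x \<in> s" "x \<notin> t" | "x \<notin> s" "x \<in> t" | "x \<in> s" "x \<in> t" using u by auto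
      then show "p \<in> f1 ` TT C \<union> f2 ` TT C \<union> f3 ` TT C"
      proof cases
        case 1
        have "p = f1 (s - {x}, t)" using 1 st unfolding f1_def by auto
        moreover have "t - {x} = t" using 1 by auto
        ultimately show ?thesis using T0 by auto
      next
        case 2
        have "p = f2 (s, t - {x})" using 2 st unfolding f2_def by auto
        moreover have "s - {x} = s" using 2 by auto
        ultimately show ?thesis using T0 by auto
      next
        case 3
        have "p = f3 (s - {x}, t - {x})" using 3 st unfolding f3_def by auto
        then show ?thesis using T0 by auto
      qed
    qed
  qed
  have i1: "inj_on f1 (TT C)"
  proof (rule inj_onI)
    fix p q assume "p \<in> TT C" "q \<in> TT C" "f1 p = f1 q"
    then show "p = q"
    proof -
      assume a: "p \<in> TT C" "q \<in> TT C" "f1 p = f1 q"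
      obtain s t s' t' where pq: "p = (s,t)" "q = (s',t')" by (cases p, cases q) auto
      have "x \<notin> s" "x \<notin> t" "x \<notin> s'" "x \<notin> t'" using sub a pq by auto
      then show ?thesis using a(3) pq unfolding f1_def by (simp add: insert_ident)
    qed
  qed
  have i2: "inj_on f2 (TT C)"
  proof (rule inj_onI)
    fix p q assume "p \<in> TT C" "q \<in> TT C" "f2 p = f2 q"
    then show "p = q"
    proof -
      assume a: "p \<in> TT C" "q \<in> TT C" "f2 p = f2 q"
      obtain s t s' t' where pq: "p = (s,t)" "q = (s',t')" by (cases p, cases q) auto
      have "x \<notin> s" "x \<notin> t" "x \<notin> s'" "x \<notin> t'" using sub a pq by auto
      then show ?thesis using a(3) pq unfolding f2_def by (simp add: insert_ident)
    qed
  qed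
  have i3: "inj_on f3 (TT C)"
  proof (rule inj_onI)
    fix p q assume "p \<in> TT C" "q \<in> TT C" "f3 p = f3 q"
    then show "p = q"
    proof -
      assume a: "p \<in> TT C" "q \<in> TT C" "f3 p = f3 q"
      obtain s t s' t' where pq: "p = (s,t)" "q = (s',t')" by (cases p, cases q) auto
      have "x \<notin> s" "x \<notin> t" "x \<notin> s'" "x \<notin> t'" using sub a pq by auto
      then show ?thesis using a(3) pq unfolding f3_def by (simp add: insert_ident)
    qed
  qed
  have fin: "finite (TT C)" using TT_fin insert(1) .
  have d12: "f1 ` TT C \<inter> f2 ` TT C = {}"
  proof -
    have "\<And>p. p \<in> f1 ` TT C \<Longrightarrow> x \<in> fst p \<and> x \<notin> snd p" unfolding f1_def using sub by auto
    moreover have "\<And>p. p \<in> f2 ` TT C \<Longrightarrow> x \<notin> fst p" unfolding f2_def using sub by auto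
    ultimately show ?thesis by blast
  qed
  have d3: "(f1 ` TT C \<union> f2 ` TT C) \<inter> f3 ` TT C = {}"
  proof -
    have "\<And>p. p \<in> f1 ` TT C \<Longrightarrow> x \<notin> snd p" unfolding f1_def using sub by auto
    moreover have "\<And>p. p \<in> f2 ` TT C \<Longrightarrow> x \<notin> fst p" unfolding f2_def using sub by auto
    moreover have "\<And>p. p \<in> f3 ` TT C \<Longrightarrow> x \<in> fst p \<and> x \<in> snd p" unfolding f3_def using sub by auto
    ultimately show ?thesis by blast
  qed
  have "card (TT (insert x C)) = card (f1 ` TT C \<union> f2 ` TT C) + card (f3 ` TT C)"
    unfolding eq using fin d3 by (simp add: card_Un_disjoint)
  also have "\<dots> = card (f1 ` TT C) + card (f2 ` TT C) + card (f3 ` TT C)"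
    using fin d12 by (simp add: card_Un_disjoint)
  also have "\<dots> = 3 * card (TT C)" using i1 i2 i3 by (simp add: card_image)
  finally show ?case using insert by simp
qed

lemma bmul_PP:
  assumes f1: "finite B1" and f2: "finite B2"
    and d1: "A1 \<inter> B1 = {}" and d2: "A2 \<inter> B2 = {}" and d3: "A1 \<inter> B2 = {}" and d4: "A2 \<inter> B1 = {}"
  shows "bmul (PP A1 B1) (PP A2 B2) = PP (A1 \<union> A2) (B1 \<union> B2)"
  unfolding bmul_def
proof (rule set_eqI)
  fix m
  define S where "S = {(a, b). a \<in> PP A1 B1 \<and> b \<in> PP A2 B2 \<and> a \<union> b = m}"
  have "odd (card S) \<longleftrightarrow> m \<in> PP (A1 \<union> A2) (B1 \<union> B2)"
  proof (cases "m \<in> PP (A1 \<union> A2) (B1 \<union> B2)")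
    case False
    have "S = {}" using False unfolding S_def PP_def by auto
    then show ?thesis using False by simp
  next
    case True
    define C where "C = m \<inter> B1 \<inter> B2"
    define g where "g = (\<lambda>(s,t). (A1 \<union> (m \<inter> B1 - B2) \<union> s, A2 \<union> (m \<inter> B2 - B1) \<union> t))"
    have mP: "A1 \<union> A2 \<subseteq> m" "m \<subseteq> A1 \<union> A2 \<union> B1 \<union> B2" using True unfolding PP_def by auto
    have "S = g ` TT C"
    proof
      show "S \<subseteq> g ` TT C"
      proof
        fix p assume p: "p \<in> S"
        obtain a b where ab: "p = (a,b)" by (cases p)
        have a: "A1 \<subseteq> a" "a \<subseteq> A1 \<union> B1" and b: "A2 \<subseteq> b" "b \<subseteq> A2 \<union> B2" and u: "a \<union> b = m"
          using p ab unfolding S_def PP_def by auto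
        have "(a \<inter> C, b \<inter> C) \<in> TT C" unfolding TT_def C_def using u by auto
        moreover have "g (a \<inter> C, b \<inter> C) = (a, b)"
          unfolding g_def C_def using a b u d1 d2 d3 d4 by auto
        ultimately show "p \<in> g ` TT C" using ab by force
      qed
    next
      show "g ` TT C \<subseteq> S"
      proof
        fix p assume "p \<in> g ` TT C"
        then obtain s t where st: "s \<union> t = C" "p = g (s,t)" unfolding TT_def by auto
        show "p \<in> S" unfolding S_def PP_def g_def st(2) using st(1) mP d1 d2 d3 d4
          unfolding C_def by auto
      qed
    qed
    moreover have "inj_on g (TT C)"
    proof (rule inj_onI)
      fix p q assume p: "p \<in> TT C" and q: "q \<in> TT C" and e: "g p = g q"
      obtain s t where st: "p = (s,t)" by (cases p)
      obtain s' t' where st': "q = (s',t')" by (cases q)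
      have "s \<subseteq> C" "t \<subseteq> C" "s' \<subseteq> C" "t' \<subseteq> C" using p q st st' unfolding TT_def by auto
      moreover have e1: "A1 \<union> (m \<inter> B1 - B2) \<union> s = A1 \<union> (m \<inter> B1 - B2) \<union> s'"
        and e2: "A2 \<union> (m \<inter> B2 - B1) \<union> t = A2 \<union> (m \<inter> B2 - B1) \<union> t'"
        using e st st' unfolding g_def by simp_all
      ultimately have "s = s'" "t = t'" using d1 d2 d3 d4 unfolding C_def
        by (blast, blast)
      then show "p = q" using st st' by simp
    qed
    ultimately have "card S = 3 ^ card C" using TT_card[of C] f1 by (simp add: card_image C_def)
    then show ?thesis using True by simp
  qed
  then show "m \<in> {m. odd (card {(a, b). a \<in> PP A1 B1 \<and> b \<in> PP A2 B2 \<and> a \<union> b = m})} \<longleftrightarrow> m \<in> PP (A1 \<union> A2) (B1 \<union> B2)"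
    unfolding S_def by simp
qed

lemma TM_PP:
  assumes "A \<inter> B = {}"
  shows "TM (PP A B) = A"
  unfolding TM_def
proof (rule the_equality)
  show "A \<in> PP A B \<and> (\<forall>m'\<in>PP A B. m' \<noteq> A \<longrightarrow> lex_less A m')"
  proof (intro conjI ballI impI)
    show "A \<in> PP A B" unfolding PP_def by auto
  next
    fix m' assume m': "m' \<in> PP A B" "m' \<noteq> A"
    then have sub: "A \<subseteq> m'" unfolding PP_def by auto
    then have ne: "m' - A \<noteq> {}" using m'(2) by auto
    define i where "i = (LEAST i. i \<in> m' - A)"
    have i: "i \<in> m' - A" unfolding i_def using ne by (metis LeastI ex_in_conv)
    have "\<forall>j<i. j \<in> A \<longleftrightarrow> j \<in> m'"
      using sub not_less_Least unfolding i_def by blast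
    then show "lex_less A m'" unfolding lex_less_def using i by blast
  qed
next
  fix m assume m: "m \<in> PP A B \<and> (\<forall>m'\<in>PP A B. m' \<noteq> m \<longrightarrow> lex_less m m')"
  show "m = A"
  proof (rule ccontr)
    assume "m \<noteq> A"
    moreover have "A \<in> PP A B" unfolding PP_def by auto
    ultimately have "lex_less m A" using m by auto
    moreover have "A \<subseteq> m" using m unfolding PP_def by auto
    ultimately show False unfolding lex_less_def by blast
  qed
qed

lemma bdiv_PP:
  assumes "A \<inter> B = {}"
  shows "bdiv_mono (PP A B) A = PP {} B"
  unfolding bdiv_mono_def
proof
  show "(\<lambda>m. m - A) ` PP A B \<subseteq> PP {} B" unfolding PP_def by auto
next
  show "PP {} B \<subseteq> (\<lambda>m. m - A) ` PP A B"
  proof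
    fix s assume "s \<in> PP {} B"
    then have "s \<subseteq> B" unfolding PP_def by auto
    then have "s = (A \<union> s) - A" "A \<union> s \<in> PP A B" using assms unfolding PP_def by auto
    then show "s \<in> (\<lambda>m. m - A) ` PP A B" by blast
  qed
qed

lemma factor_PP:
  "badd (badd bone (bvar i)) (phi_const S i) = (if i \<in> S then PP {i} {} else PP {} {i})"
proof -
  have "badd bone (bvar i) = {{}, {i}}" unfolding badd_def bone_def bvar_def by auto
  moreover have "PP {i} {} = {{i}}" unfolding PP_def by auto
  moreover have "PP {} {i} = {{}, {i}}" unfolding PP_def by auto
  ultimately show ?thesis unfolding phi_const_def badd_def bone_def bzero_def by auto
qed

lemma bprod_PP:
  "bprod_upto (\<lambda>i. badd (badd bone (bvar i)) (phi_const S i)) k = PP (S \<inter> {..<k}) ({..<k} - S)"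
proof (induction k)
  case 0
  show ?case by (auto simp: PP_def bone_def)
next
  case (Suc k)
  have fin: "finite ({..<k} - S)" by simp
  show ?case
  proof (cases "k \<in> S")
    case True
    have "bmul (PP (S \<inter> {..<k}) ({..<k} - S)) (PP {k} {}) = PP (S \<inter> {..<k} \<union> {k}) ({..<k} - S \<union> {})"
      by (rule bmul_PP) (use fin in auto)
    moreover have "S \<inter> {..<k} \<union> {k} = S \<inter> {..<Suc k}" "{..<k} - S \<union> {} = {..<Suc k} - S"
      using True less_Suc_eq by auto
    ultimately show ?thesis using Suc True by (simp add: factor_PP)
  next
    case False
    have "bmul (PP (S \<inter> {..<k}) ({..<k} - S)) (PP {} {k}) = PP (S \<inter> {..<k} \<union> {}) ({..<k} - S \<union> {k})"
      by (rule bmul_PP) (use fin in auto)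
    moreover have "S \<inter> {..<k} \<union> {} = S \<inter> {..<Suc k}" "{..<k} - S \<union> {k} = {..<Suc k} - S"
      using False less_Suc_eq by auto
    ultimately show ?thesis using Suc False by (simp add: factor_PP)
  qed
qed

lemma xi_PP: "xi n S = PP (S \<inter> {..<n}) ({..<n} - S)"
  unfolding xi_def by (rule bprod_PP)

theorem mainTheorem17:
  fixes n :: nat and Q R F :: "nat set"
  assumes "Q \<subseteq> {..<n}" and "R \<subseteq> {..<n}" and "F \<subseteq> {..<n}"
  shows "xi n ((Q \<inter> R) - F) = xi n ((Q \<inter> R) \<inter> ({..<n} - F))
    \<and> xi n ((Q \<inter> R) \<inter> ({..<n} - F)) =
      bmul (mono_gcd3 (bdiv_mono (xi n {..<n}) (TM (xi n F)))
                      {TM (xi n Q)} {TM (xi n R)})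
           (bmul (bmul (bdiv_mono (xi n Q) (TM (xi n Q)))
                       (bdiv_mono (xi n R) (TM (xi n R))))
                 (bdiv_mono (xi n ({..<n} - F)) (TM (xi n ({..<n} - F)))))"
proof
  define N where "N = {..<n::nat}"
  have Q: "Q \<subseteq> N" and R: "R \<subseteq> N" and F: "F \<subseteq> N" using assms unfolding N_def by auto
  have finN: "finite N" unfolding N_def by simp
  have e1: "(Q \<inter> R) - F = (Q \<inter> R) \<inter> ({..<n} - F)" using Q unfolding N_def by auto
  then show "xi n ((Q \<inter> R) - F) = xi n ((Q \<inter> R) \<inter> ({..<n} - F))" by simp
  define M where "M = (Q \<inter> R) - F"
  have xQ: "xi n Q = PP Q (N - Q)" using Q unfolding xi_PP N_def by (simp add: Int_absorb2)
  have xR: "xi n R = PP R (N - R)" using R unfolding xi_PP N_def by (simp add: Int_absorb2)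
  have xF: "xi n F = PP F (N - F)" using F unfolding xi_PP N_def by (simp add: Int_absorb2)
  have xN: "xi n {..<n} = PP N {}" unfolding xi_PP N_def by simp
  have xFc: "xi n ({..<n} - F) = PP (N - F) F" using F unfolding xi_PP N_def by (simp add: Diff_Diff_Int Int_absorb1 Int_absorb2)
  have xM: "xi n ((Q \<inter> R) \<inter> ({..<n} - F)) = PP M ((N - Q) \<union> (N - R) \<union> F)"
  proof -
    have a: "(Q \<inter> R \<inter> ({..<n} - F)) \<inter> {..<n} = M" using Q unfolding M_def N_def by blast
    have b: "{..<n} - (Q \<inter> R \<inter> ({..<n} - F)) = (N - Q) \<union> (N - R) \<union> F" using F unfolding N_def by blast
    show ?thesis unfolding xi_PP a b ..
  qed
  have tQ: "TM (xi n Q) = Q" unfolding xQ by (rule TM_PP) auto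
  have tR: "TM (xi n R) = R" unfolding xR by (rule TM_PP) auto
  have tF: "TM (xi n F) = F" unfolding xF by (rule TM_PP) auto
  have tFc: "TM (xi n ({..<n} - F)) = N - F" unfolding xFc by (rule TM_PP) auto
  have dQ: "bdiv_mono (xi n Q) (TM (xi n Q)) = PP {} (N - Q)" unfolding tQ unfolding xQ by (rule bdiv_PP) auto
  have dR: "bdiv_mono (xi n R) (TM (xi n R)) = PP {} (N - R)" unfolding tR unfolding xR by (rule bdiv_PP) auto
  have dFc: "bdiv_mono (xi n ({..<n} - F)) (TM (xi n ({..<n} - F))) = PP {} F" unfolding tFc unfolding xFc by (rule bdiv_PP) auto
  have PN: "PP N {} = {N}" unfolding PP_def by auto
  have dN: "bdiv_mono (xi n {..<n}) (TM (xi n F)) = {N - F}" unfolding tF unfolding xN PN bdiv_mono_def by simp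
  have g: "mono_gcd3 (bdiv_mono (xi n {..<n}) (TM (xi n F))) {TM (xi n Q)} {TM (xi n R)} = PP M {}"
    unfolding dN tQ tR mono_gcd3_def the_mono_def M_def PP_def using Q by auto
  have fF: "finite F" using F finN finite_subset by blast
  have p1: "bmul (PP {} (N - Q)) (PP {} (N - R)) = PP {} ((N - Q) \<union> (N - R))"
    using bmul_PP[of "N - Q" "N - R" "{}" "{}"] finN by simp
  have p2: "bmul (PP {} ((N - Q) \<union> (N - R))) (PP {} F) = PP {} ((N - Q) \<union> (N - R) \<union> F)"
    using bmul_PP[of "(N - Q) \<union> (N - R)" F "{}" "{}"] finN fF by simp
  have p3: "bmul (PP M {}) (PP {} ((N - Q) \<union> (N - R) \<union> F)) = PP M ((N - Q) \<union> (N - R) \<union> F)"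
    using bmul_PP[of "{}" "(N - Q) \<union> (N - R) \<union> F" M "{}"] finN fF unfolding M_def by (simp add: Int_Un_distrib; blast)
  show "xi n ((Q \<inter> R) \<inter> ({..<n} - F)) =
      bmul (mono_gcd3 (bdiv_mono (xi n {..<n}) (TM (xi n F)))
                      {TM (xi n Q)} {TM (xi n R)})
           (bmul (bmul (bdiv_mono (xi n Q) (TM (xi n Q)))
                       (bdiv_mono (xi n R) (TM (xi n R))))
                 (bdiv_mono (xi n ({..<n} - F)) (TM (xi n ({..<n} - F)))))"
    unfolding g dQ dR dFc p1 p2 p3 xM ..
qed

end
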